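(* Let $C$ be a field of characteristic zero with algebraic closure $\bar C$, and let $L=\ell_0+\ell_1S+\cdots+\ell_rS^r\in C(x)[S]$ with $\ell_0,\ell_r\ne0$, where $S$ is the shift operator with $Sx=(x+1)S$. Let $V=\bar C(x)[S]/\langle L\rangle$ with $\langle L\rangle=\bar C(x)[S]L$, a $\bar C(x)$-vector space. For $z\in\bar C$ define $\operatorname{val}_z\colon V\to\mathbb{Z}\cup\{\infty\}$ by \[\operatorname{val}_z(B)=\min_{b\in\operatorname{Sol}(L)}\Bigl(\nu_q((B\cdot b)(z))-\liminf_{n\to\infty}\nu_q(b(z-n))\Bigr),\] with the convention $\infty-\infty=\infty$. Then $\operatorname{val}_z$ is a value function on $V$ with respect to the valuation $\nu_z$ on $\bar C(x)$.
   Context: Let $q$ be a new indeterminate. For an orbit $z+\mathbb{Z}$, an operator $A=a_0+a_1S+\cdots+a_mS^m\in\bar C(x)[S]$ acts on a sequence $f\colon z+\mathbb{Z}\to\bar C((q))$ by $(A\cdot f)(w)=a_0(w+q)f(w)+a_1(w+q)f(w+1)+\cdots+a_m(w+q)f(w+m)$ for $w\in z+\mathbb{Z}$ (no coefficient has a pole at $w+q$). $\operatorname{Sol}(L)=\{f\colon z+\mathbb{Z}\to\bar C((q)) : L\cdot f=0\}$, an $r$-dimensional $\bar C((q))$-vector space; for $B\in V$ and $b\in\operatorname{Sol}(L)$, $B\cdot b$ is well defined using any representative of $B$. For nonzero $a\in\bar C((q))$, $\nu_q(a)$ is the least $n$ with nonzero coefficient of $q^n$, and $\nu_q(0)=\infty$.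 For nonzero $f\in\bar C(x)$, $\nu_z(f)$ is the integer $m$ with $f=(x-z)^ma/b$, $a,b\in\bar C[x]$ not divisible by $x-z$; $\nu_z(0)=\infty$. A value function on $V$ w.r.t. $\nu_z$ is a map $\operatorname{val}$ with $\operatorname{val}(v)=\infty\iff v=0$, $\operatorname{val}(av)=\nu_z(a)+\operatorname{val}(v)$ for $a\in\bar C(x)$, and $\operatorname{val}(v+w)\ge\min(\operatorname{val}(v),\operatorname{val}(w))$. *)

theory Defs
  imports "HOL-Computational_Algebra.Computational_Algebra" "HOL-Library.Extended_Real"
begin

text \<open>Rational functions in x over a field 'a are modelled as 'a poly fract.
  Laurent series in q are 'a fls (q = fls_X).\<close>

text \<open>A representative (numerator, denominator) of a fraction; the definitions below are
  independent of the choice of representative.\<close>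
definition rf_num :: "'a::idom fract \<Rightarrow> 'a" where "rf_num r = fst (rep_fract r)"
definition rf_den :: "'a::idom fract \<Rightarrow> 'a" where "rf_den r = snd (rep_fract r)"

definition rf_shift :: "'a::field \<Rightarrow> 'a poly fract \<Rightarrow> 'a poly fract" where
  "rf_shift c r = Fract (pcompose (rf_num r) [:c, 1:]) (pcompose (rf_den r) [:c, 1:])"

definition rf_to_fls :: "'a::field poly fract \<Rightarrow> 'a fls" where
  "rf_to_fls r = fps_to_fls (fps_of_poly (rf_num r)) / fps_to_fls (fps_of_poly (rf_den r))"

text \<open>Evaluation of a rational function a at w + q, giving a Laurent series in q.\<close>
definition rf_eval_q :: "'a::field \<Rightarrow> 'a poly fract \<Rightarrow> 'a fls" where
  "rf_eval_q w a = rf_to_fls (rf_shift w a)"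

definition nu_q :: "'a::field fls \<Rightarrow> ereal" where
  "nu_q a = (if a = 0 then \<infinity> else ereal (of_int (fls_subdegree a)))"

definition nu_z :: "'a::field \<Rightarrow> 'a poly fract \<Rightarrow> ereal" where
  "nu_z z r = (if r = 0 then \<infinity>
     else ereal (of_int (int (order z (rf_num r)) - int (order z (rf_den r)))))"

text \<open>Operators in C(x)[S] are represented by their coefficient polynomial in S:
  B = sum_i coeff B i * S^i.\<close>

definition ore_mult :: "'a::field poly fract poly \<Rightarrow> 'a poly fract poly \<Rightarrow> 'a poly fract poly" where
  "ore_mult A B = (\<Sum>i\<le>degree A. \<Sum>j\<le>degree B.
      monom (coeff A i * rf_shift (of_nat i) (coeff B j)) (i + j))"

definition in_left_ideal :: "'a::field poly fract poly \<Rightarrow> 'a poly fract poly \<Rightarrow> bool" where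
  "in_left_ideal L B \<longleftrightarrow> (\<exists>A. B = ore_mult A L)"

text \<open>Action on sequences on the orbit z + Z; f n stands for f(z + n).\<close>
definition op_act :: "'a::field \<Rightarrow> 'a poly fract poly \<Rightarrow> (int \<Rightarrow> 'a fls) \<Rightarrow> int \<Rightarrow> 'a fls" where
  "op_act z A f n = (\<Sum>i\<le>degree A. rf_eval_q (z + of_int n) (coeff A i) * f (n + int i))"

definition Sol :: "'a::field \<Rightarrow> 'a poly fract poly \<Rightarrow> (int \<Rightarrow> 'a fls) set" where
  "Sol z L = {f. \<forall>n. op_act z L f n = 0}"

definition val_z :: "'a::field \<Rightarrow> 'a poly fract poly \<Rightarrow> 'a poly fract poly \<Rightarrow> ereal" where
  "val_z z L B = (INF b\<in>Sol z L.
      (let m = liminf (\<lambda>n::nat. nu_q (b (- int n)))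
       in if m = \<infinity> then \<infinity> else nu_q (op_act z B b 0) - m))"

text \<open>C(x) inside Cbar(x): rational functions with coefficients in the subfield Cs.\<close>
definition rf_over :: "'a::field set \<Rightarrow> 'a poly fract \<Rightarrow> bool" where
  "rf_over Cs a \<longleftrightarrow> (\<exists>p d. d \<noteq> 0 \<and> set (coeffs p) \<subseteq> Cs \<and> set (coeffs d) \<subseteq> Cs \<and> a = Fract p d)"

definition is_subfield :: "'a::field set \<Rightarrow> bool" where
  "is_subfield Cs \<longleftrightarrow> 0 \<in> Cs \<and> 1 \<in> Cs \<and> (\<forall>a\<in>Cs. \<forall>b\<in>Cs. a + b \<in> Cs \<and> a * b \<in> Cs)
     \<and> (\<forall>a\<in>Cs. - a \<in> Cs \<and> inverse a \<in> Cs)"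

definition algebraic_over :: "'a::field set \<Rightarrow> bool" where
  "algebraic_over Cs \<longleftrightarrow> (\<forall>x. \<exists>p. p \<noteq> 0 \<and> set (coeffs p) \<subseteq> Cs \<and> poly p x = 0)"

end

theory Submission
  imports Defs
begin

lemma rep_fract_props:
  "snd (rep_fract r) \<noteq> 0" "Fract (fst (rep_fract r)) (snd (rep_fract r)) = r"
proof -
  have q: "Quotient3 fractrel abs_fract rep_fract" by (rule Quotient3_fract)
  have fr: "fractrel (rep_fract r) (rep_fract r)" using Quotient3_rep_reflp[OF q] .
  then show "snd (rep_fract r) \<noteq> 0" by simp
  have "abs_fract (rep_fract r) = r" using Quotient3_abs_rep[OF q, of r] .
  thus "Fract (fst (rep_fract r)) (snd (rep_fract r)) = r"
    using \<open>snd (rep_fract r) \<noteq> 0\<close> by (simp add: Fract_def)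
qed

lemma rf_num_den: "rf_den r \<noteq> 0" "Fract (rf_num r) (rf_den r) = r"
  using rep_fract_props unfolding rf_num_def rf_den_def by auto

definition E0 :: "'a::field poly \<Rightarrow> 'a fls" where
  "E0 p = fps_to_fls (fps_of_poly p)"

lemma E0_simps[simp]: "E0 (p + q) = E0 p + E0 q" "E0 (p * q) = E0 p * E0 q"
  "E0 0 = 0" "E0 1 = 1" "E0 (- p) = - E0 p" "E0 (p - q) = E0 p - E0 q"
  by (simp_all add: E0_def fps_of_poly_add fps_of_poly_mult fps_to_fls_plus fls_times_fps_to_fls
      fps_of_poly_diff fps_to_fls_minus fps_to_fls_uminus fps_of_poly_uminus)

lemma E0_eq_0_iff[simp]: "E0 p = 0 \<longleftrightarrow> p = 0"
  unfolding E0_def by (metis fps_to_fls_eq_0_iff fps_of_poly_0 fps_of_poly_eq_iff)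

lemma rf_to_fls_Fract: assumes "d \<noteq> 0" shows "rf_to_fls (Fract p d) = E0 p / E0 d"
proof -
  let ?r = "Fract p d"
  have "Fract (rf_num ?r) (rf_den ?r) = Fract p d" by (simp add: rf_num_den)
  hence "rf_num ?r * d = p * rf_den ?r" using eq_fract(1)[OF rf_num_den(1) assms] by simp
  hence "E0 (rf_num ?r) * E0 d = E0 p * E0 (rf_den ?r)" by (metis E0_simps(2))
  moreover have "E0 d \<noteq> 0" "E0 (rf_den ?r) \<noteq> 0" using assms rf_num_den(1) by auto
  ultimately have "E0 (rf_num ?r) / E0 (rf_den ?r) = E0 p / E0 d"
    by (simp add: frac_eq_eq)
  thus ?thesis by (simp add: rf_to_fls_def E0_def)
qed

lemma pcomp_lin_ne0: "(p::'a::field poly) \<noteq> 0 \<Longrightarrow> p \<circ>\<^sub>p [:c, 1:] \<noteq> 0"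
  using pcompose_eq_0_iff[of "[:c,1:]" p] by simp

lemma rf_shift_Fract: assumes "d \<noteq> 0"
  shows "rf_shift c (Fract p d) = Fract (p \<circ>\<^sub>p [:c,1:]) (d \<circ>\<^sub>p [:c,1:])"
proof -
  let ?r = "Fract p d"
  have "Fract (rf_num ?r) (rf_den ?r) = Fract p d" by (simp add: rf_num_den)
  hence e: "rf_num ?r * d = p * rf_den ?r" using eq_fract(1)[OF rf_num_den(1) assms] by simp
  have "(rf_num ?r \<circ>\<^sub>p [:c,1:]) * (d \<circ>\<^sub>p [:c,1:]) = (p \<circ>\<^sub>p [:c,1:]) * (rf_den ?r \<circ>\<^sub>p [:c,1:])"
    using e by (metis pcompose_mult)
  thus ?thesis unfolding rf_shift_def
    using eq_fract(1)[OF pcomp_lin_ne0[OF rf_num_den(1)] pcomp_lin_ne0[OF assms]] by simp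
qed

definition ev :: "'a::field \<Rightarrow> 'a poly \<Rightarrow> 'a fls" where
  "ev w p = E0 (p \<circ>\<^sub>p [:w,1:])"

lemma pcompose_1: "1 \<circ>\<^sub>p q = 1"
  by (metis pCons_one pcompose_const)

lemma pcomp_lin_lin: "[:c,1:] \<circ>\<^sub>p [:w,1:] = [:c+w, 1::'a::field:]"
  by (simp add: pcompose_pCons)

lemma ev_simps[simp]: "ev w (p + q) = ev w p + ev w q" "ev w (p * q) = ev w p * ev w q"
  "ev w 0 = 0" "ev w 1 = 1" "ev w (- p) = - ev w p" "ev w (p - q) = ev w p - ev w q"
  by (simp_all add: ev_def pcompose_add pcompose_mult pcompose_uminus pcompose_diff
     pcompose_1)

lemma ev_eq_0_iff[simp]: "ev w p = 0 \<longleftrightarrow> p = 0"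
  using pcomp_lin_ne0[of p w] by (auto simp add: ev_def)

lemma rf_eval_Fract: assumes "d \<noteq> 0" shows "rf_eval_q w (Fract p d) = ev w p / ev w d"
  unfolding rf_eval_q_def using assms
  by (simp add: rf_shift_Fract rf_to_fls_Fract pcomp_lin_ne0 ev_def)

lemma ev_shift: "ev w (p \<circ>\<^sub>p [:c,1:]) = ev (c + w) p"
  by (simp add: ev_def pcompose_assoc[symmetric] pcomp_lin_lin add.commute)

lemma rf_eval_add[simp]: "rf_eval_q w (a + b) = rf_eval_q w a + rf_eval_q w b"
  proof (cases a; cases b)
  fix p d p' d' assume h: "a = Fract p d" "d \<noteq> 0" "b = Fract p' d'" "d' \<noteq> 0"
  have "a + b = Fract (p * d' + p' * d) (d * d')" using h by simp
  hence "rf_eval_q w (a + b) = ev w (p * d' + p' * d) / ev w (d * d')"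
    using h by (simp add: rf_eval_Fract del: ev_simps)
  also have "\<dots> = ev w p / ev w d + ev w p' / ev w d'"
    using h by (simp add: add_frac_eq)
  finally show ?thesis using h by (simp add: rf_eval_Fract)
qed
lemma rf_eval_mult[simp]: "rf_eval_q w (a * b) = rf_eval_q w a * rf_eval_q w b"
  by (cases a; cases b) (simp add: rf_eval_Fract)
lemma rf_eval_0[simp]: "rf_eval_q w 0 = 0"
  by (simp add: Zero_fract_def rf_eval_Fract)
lemma rf_eval_uminus[simp]: "rf_eval_q w (- a) = - rf_eval_q w a"
  by (cases a) (simp add: rf_eval_Fract)
lemma rf_eval_diff[simp]: "rf_eval_q w (a - b) = rf_eval_q w a - rf_eval_q w b"
  by (metis diff_conv_add_uminus rf_eval_add rf_eval_uminus)
lemma rf_eval_eq_0_iff[simp]: "rf_eval_q w a = 0 \<longleftrightarrow> a = 0"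
  by (cases a) (auto simp add: rf_eval_Fract eq_fract Zero_fract_def)
lemma rf_eval_shift[simp]: "rf_eval_q w (rf_shift c a) = rf_eval_q (c + w) a"
  by (cases a) (simp add: rf_eval_Fract rf_shift_Fract pcomp_lin_ne0 ev_shift)



lemma op_act_bound:
  assumes "degree A \<le> N"
  shows "op_act z A f n = (\<Sum>i\<le>N. rf_eval_q (z + of_int n) (coeff A i) * f (n + int i))"
  unfolding op_act_def
  by (rule sum.mono_neutral_left) (use assms in \<open>auto simp: coeff_eq_0 not_le\<close>)

lemma op_act_add: "op_act z (A + B) f n = op_act z A f n + op_act z B f n"
proof -
  let ?N = "max (degree A) (degree B)"
  have "degree (A + B) \<le> ?N" by (rule degree_add_le) auto
  then show ?thesis
    by (simp add: op_act_bound[of _ ?N] sum.distrib distrib_right)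
qed

lemma op_act_uminus: "op_act z (- A) f n = - op_act z A f n"
  by (simp add: op_act_def sum_negf)

lemma op_act_diff: "op_act z (A - B) f n = op_act z A f n - op_act z B f n"
  by (metis diff_conv_add_uminus op_act_add op_act_uminus)

lemma op_act_0[simp]: "op_act z 0 f n = 0"
  by (simp add: op_act_def)

lemma op_act_smult: "op_act z (smult a A) f n = rf_eval_q (z + of_int n) a * op_act z A f n"
proof -
  have "degree (smult a A) \<le> degree A" by (rule degree_smult_le)
  then show ?thesis by (simp add: op_act_bound[of _ "degree A"] sum_distrib_left mult.assoc)
qed

lemma op_act_monom: "op_act z (monom c k) f n = rf_eval_q (z + of_int n) c * f (n + int k)"
proof -
  have "degree (monom c k) \<le> k" by (simp add: degree_monom_le)
  then show ?thesis
    by (simp add: op_act_bound[of _ k] coeff_monom if_distrib if_distribR cong: if_cong)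
qed

lemma op_act_sum: "finite S \<Longrightarrow> op_act z (\<Sum>s\<in>S. g s) f n = (\<Sum>s\<in>S. op_act z (g s) f n)"
  by (induction S rule: finite_induct) (simp_all add: op_act_add)

lemma rf_shift_0[simp]: "rf_shift c 0 = 0"
  by (simp add: Zero_fract_def rf_shift_Fract pcompose_1 eq_fract)

lemma ore_mult_bound:
  assumes "degree A \<le> N" "degree B \<le> M"
  shows "ore_mult A B = (\<Sum>i\<le>N. \<Sum>j\<le>M. monom (coeff A i * rf_shift (of_nat i) (coeff B j)) (i + j))"
proof -
  have "ore_mult A B = (\<Sum>i\<le>N. \<Sum>j\<le>degree B. monom (coeff A i * rf_shift (of_nat i) (coeff B j)) (i + j))"
    unfolding ore_mult_def
    by (rule sum.mono_neutral_left) (use assms in \<open>auto simp: coeff_eq_0 not_le\<close>)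
  then show ?thesis
    by (simp, intro sum.cong[OF refl] sum.mono_neutral_left) (use assms in \<open>auto simp: coeff_eq_0 not_le\<close>)
qed

lemma ore_mult_add_left: "ore_mult (A1 + A2) B = ore_mult A1 B + ore_mult A2 B"
proof -
  let ?N = "max (degree A1) (degree A2)"
  have "degree (A1 + A2) \<le> ?N" by (rule degree_add_le) auto
  then show ?thesis
    by (simp add: ore_mult_bound[of _ ?N _ "degree B"] sum.distrib[symmetric] distrib_right add_monom[symmetric])
qed

lemma ore_mult_0_left[simp]: "ore_mult 0 B = 0"
  by (simp add: ore_mult_def)

lemma op_act_ore_mult: "op_act z (ore_mult A B) f n = op_act z A (op_act z B f) n"
proof -
  have "op_act z (ore_mult A B) f n =
    (\<Sum>i\<le>degree A. \<Sum>j\<le>degree B. rf_eval_q (z + of_int n) (coeff A i) *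
        (rf_eval_q (z + of_int (n + int i)) (coeff B j) * f (n + int i + int j)))"
    unfolding ore_mult_def
    by (simp add: op_act_sum op_act_monom add.commute add.left_commute mult.assoc)
  also have "\<dots> = op_act z A (op_act z B f) n"
    by (simp add: op_act_def sum_distrib_left)
  finally show ?thesis .
qed



lemma rf_shift_eq_0_iff[simp]: "rf_shift c a = 0 \<longleftrightarrow> a = 0"
proof
  assume "rf_shift c a = 0"
  hence "rf_eval_q 0 (rf_shift c a) = 0" by simp
  thus "a = 0" by simp
qed simp

lemma ore_mult_monom:
  "ore_mult (monom c k) B = (\<Sum>j\<le>degree B. monom (c * rf_shift (of_nat k) (coeff B j)) (k + j))"
proof -
  have "ore_mult (monom c k) B = (\<Sum>i\<le>k. \<Sum>j\<le>degree B. monom (coeff (monom c k) i * rf_shift (of_nat i) (coeff B j)) (i + j))"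
    by (rule ore_mult_bound) (auto simp: degree_monom_le)
  also have "\<dots> = (\<Sum>i\<in>{k}. \<Sum>j\<le>degree B. monom (coeff (monom c k) i * rf_shift (of_nat i) (coeff B j)) (i + j))"
    by (rule sum.mono_neutral_right) (auto simp: coeff_monom)
  finally show ?thesis by (simp add: coeff_monom)
qed

lemma coeff_ore_mult_monom:
  "coeff (ore_mult (monom c k) B) m = (if k \<le> m then c * rf_shift (of_nat k) (coeff B (m - k)) else 0)"
proof -
  have "coeff (ore_mult (monom c k) B) m = (\<Sum>j\<le>degree B. if k + j = m then c * rf_shift (of_nat k) (coeff B j) else 0)"
    by (simp add: ore_mult_monom coeff_sum coeff_monom)
  also have "\<dots> = (if k \<le> m then c * rf_shift (of_nat k) (coeff B (m - k)) else 0)"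
  proof (cases "k \<le> m \<and> m - k \<le> degree B")
    case True
    then have "(\<Sum>j\<le>degree B. if k + j = m then c * rf_shift (of_nat k) (coeff B j) else 0)
        = (\<Sum>j\<le>degree B. if j = m - k then c * rf_shift (of_nat k) (coeff B j) else 0)"
      by (intro sum.cong) auto
    then show ?thesis using True by simp
  next
    case False
    then have "(\<Sum>j\<le>degree B. if k + j = m then c * rf_shift (of_nat k) (coeff B j) else 0) = 0"
      by (intro sum.neutral) auto
    then show ?thesis using False by (auto simp: coeff_eq_0)
  qed
  finally show ?thesis .
qed

lemma ore_div_aux:
  assumes "lead_coeff L \<noteq> 0"
  shows "\<forall>B. (\<forall>m\<ge>N. coeff B m = 0) \<longrightarrow> (\<exists>A R. B = ore_mult A L + R \<and> (\<forall>i\<ge>degree L. coeff R i = 0))"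
proof (induction N)
  case 0
  show ?case
  proof (intro allI impI)
    fix B :: "'a poly fract poly" assume "\<forall>m\<ge>0. coeff B m = 0"
    hence "B = 0" by (intro poly_eqI) simp
    thus "\<exists>A R. B = ore_mult A L + R \<and> (\<forall>i\<ge>degree L. coeff R i = 0)"
      by (intro exI[of _ 0]) simp
  qed
next
  case (Suc N)
  show ?case
  proof (intro allI impI)
    fix B :: "'a poly fract poly" assume hB: "\<forall>m\<ge>Suc N. coeff B m = 0"
    show "\<exists>A R. B = ore_mult A L + R \<and> (\<forall>i\<ge>degree L. coeff R i = 0)"
    proof (cases "N < degree L")
      case True
      then show ?thesis using hB by (intro exI[of _ 0] exI[of _ B]) simp
    next
      case False
      define k where "k = N - degree L"
      define c where "c = coeff B N / rf_shift (of_nat k) (lead_coeff L)"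
      define B' where "B' = B - ore_mult (monom c k) L"
      have ne: "rf_shift (of_nat k) (lead_coeff L) \<noteq> 0" using assms by simp
      have "\<forall>m\<ge>N. coeff B' m = 0"
      proof (intro allI impI)
        fix m assume "N \<le> m"
        show "coeff B' m = 0"
        proof (cases "m = N")
          case True
          then show ?thesis using False ne
            by (simp add: B'_def coeff_ore_mult_monom k_def c_def)
        next
          case False
          then have "m \<ge> Suc N" "m - k > degree L" using \<open>N \<le> m\<close> \<open>\<not> N < degree L\<close> by (auto simp: k_def)
          then show ?thesis using hB by (simp add: B'_def coeff_ore_mult_monom coeff_eq_0)
        qed
      qed
      then obtain A R where AR: "B' = ore_mult A L + R" "\<forall>i\<ge>degree L. coeff R i = 0"
        using Suc.IH by blast
      have "B = ore_mult (A + monom c k) L + R"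
        using AR(1) by (simp add: B'_def ore_mult_add_left algebra_simps)
      then show ?thesis using AR(2) by blast
    qed
  qed
qed

lemma ore_div:
  assumes "lead_coeff L \<noteq> 0"
  shows "\<exists>A R. B = ore_mult A L + R \<and> (\<forall>i\<ge>degree L. coeff R i = 0)"
  using ore_div_aux[OF assms, of "Suc (degree B)"] by (auto simp: coeff_eq_0)



definition geq :: "'a::field fls \<Rightarrow> int \<Rightarrow> bool" where
  "geq x k \<longleftrightarrow> (\<forall>j<k. fls_nth x j = 0)"

lemma geq_0[simp]: "geq 0 k" by (simp add: geq_def)

lemma geq_subdeg: "geq x (fls_subdegree x)" by (simp add: geq_def)

lemma geq_iff: "x \<noteq> 0 \<Longrightarrow> geq x k \<longleftrightarrow> k \<le> fls_subdegree x"
  unfolding geq_def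
proof
  assume "x \<noteq> 0" "\<forall>j<k. fls_nth x j = 0"
  then show "k \<le> fls_subdegree x" using nth_fls_subdegree_nonzero[of x] by (meson not_le)
next
  assume "k \<le> fls_subdegree x"
  then show "\<forall>j<k. fls_nth x j = 0" by simp
qed

lemma geq_mono: "geq x k \<Longrightarrow> j \<le> k \<Longrightarrow> geq x j"
  by (simp add: geq_def)

lemma geq_add: "geq x k \<Longrightarrow> geq y k \<Longrightarrow> geq (x + y) k"
  by (simp add: geq_def)

lemma geq_uminus: "geq x k \<Longrightarrow> geq (- x) k"
  by (simp add: geq_def)

lemma geq_sum: "finite S \<Longrightarrow> (\<And>s. s \<in> S \<Longrightarrow> geq (g s) k) \<Longrightarrow> geq (\<Sum>s\<in>S. g s) k"
  by (induction S rule: finite_induct) (auto intro: geq_add)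

lemma geq_mult: "geq x a \<Longrightarrow> geq y b \<Longrightarrow> geq (x * y) (a + b)"
proof (cases "x = 0 \<or> y = 0")
  case False
  assume "geq x a" "geq y b"
  then have "a \<le> fls_subdegree x" "b \<le> fls_subdegree y" using False geq_iff by blast+
  moreover have "x * y \<noteq> 0" "fls_subdegree (x * y) = fls_subdegree x + fls_subdegree y"
    using False by (auto simp: fls_subdegree_mult)
  ultimately show ?thesis using geq_iff[of "x * y" "a + b"] by simp
qed auto

lemma geq_div: "y \<noteq> 0 \<Longrightarrow> geq x a \<Longrightarrow> geq (x / y) (a - fls_subdegree y)"
  using geq_mult[of x a "inverse y" "- fls_subdegree y"] geq_subdeg[of "inverse y"]
  by (simp add: divide_inverse fls_inverse_subdegree)

lemma all_geq_imp_0: "(\<And>k. geq x k) \<Longrightarrow> x = 0"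
  using geq_iff[of x "fls_subdegree x + 1"] by fastforce

lemma geq_nu: "geq x k \<longleftrightarrow> ereal (of_int k) \<le> nu_q x"
  by (cases "x = 0") (auto simp: nu_q_def geq_iff)

lemma nu_q_cases: "nu_q x = \<infinity> \<or> (\<exists>k::int. nu_q x = ereal (of_int k))"
  by (auto simp: nu_q_def)

lemma nu_q_not_minf[simp]: "nu_q x \<noteq> -\<infinity>"
  by (auto simp: nu_q_def)

lemma nu_q_mult: "nu_q (x * y) = nu_q x + nu_q y"
  by (auto simp: nu_q_def fls_subdegree_mult)

lemma nu_q_eq_inf[simp]: "nu_q x = \<infinity> \<longleftrightarrow> x = 0"
  by (auto simp: nu_q_def)

lemma nu_q_add: "min (nu_q x) (nu_q y) \<le> nu_q (x + y)"
proof (cases "x + y = 0")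
  case False
  show ?thesis
  proof (cases "x = 0 \<or> y = 0")
    case True then show ?thesis by (auto simp: nu_q_def)
  next
    case False2: False
    then show ?thesis using fls_plus_subdegree[OF False] False
      by (auto simp add: nu_q_def min_def split: if_splits)
  qed
qed (simp add: nu_q_def)

lemma ereal_le_int_cases:
  assumes "a = \<infinity> \<or> (\<exists>k::int. a = ereal (of_int k))"
    and "\<And>k::int. ereal (of_int k) \<le> a \<Longrightarrow> ereal (of_int k) \<le> b"
  shows "a \<le> b"
proof (cases "a = \<infinity>")
  case True
  then have all: "\<And>k::int. ereal (of_int k) \<le> b" using assms(2) by simp
  show ?thesis
  proof (cases b)
    case (real r)
    have "ereal (of_int (\<lceil>r\<rceil> + 1)) \<le> b" by (rule all)
    then have False using real by simp linarith
    then show ?thesis ..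
  next
    case PInf then show ?thesis by simp
  next
    case MInf then show ?thesis using all[of 0] by simp
  qed
next
  case False
  then obtain k::int where "a = ereal (of_int k)" using assms(1) by blast
  then show ?thesis using assms(2)[of k] by simp
qed

lemma ev_nth0: "fls_nth (ev c p) 0 = poly p c"
  by (simp add: ev_def E0_def fps_to_fls_nth poly_0_coeff_0[symmetric] poly_pcompose)

lemma pcompose_power_left: "(p ^ n) \<circ>\<^sub>p q = (p \<circ>\<^sub>p q) ^ n"
  by (induction n) (simp_all add: pcompose_mult pcompose_1)

lemma order_pcompose_lin:
  assumes "(p :: 'a::field poly) \<noteq> 0"
  shows "order 0 (p \<circ>\<^sub>p [:c,1:]) = order c p"
proof -
  obtain g where g: "p = [:- c, 1:] ^ order c p * g" "\<not> [:- c, 1:] dvd g"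
    using order_decomp[OF assms] by blast
  have gne: "g \<noteq> 0" using g(2) by auto
  have lin: "[:- c, 1:] \<circ>\<^sub>p [:c,1:] = [:- 0, 1:]" by (simp add: pcompose_pCons)
  have "p \<circ>\<^sub>p [:c,1:] = [:- 0, 1:] ^ order c p * (g \<circ>\<^sub>p [:c,1:])"
    by (subst g(1)) (simp add: pcompose_mult pcompose_power_left lin)
  moreover have "poly (g \<circ>\<^sub>p [:c,1:]) 0 \<noteq> 0"
    using g(2) by (simp add: poly_pcompose poly_eq_0_iff_dvd)
  moreover have "g \<circ>\<^sub>p [:c,1:] \<noteq> 0" using pcomp_lin_ne0[OF gne] .
  ultimately show ?thesis
    using order_power_n_n[of 0 "order c p"] by (simp add: order_mult order_root)
qed

lemma ev_subdeg: "p \<noteq> 0 \<Longrightarrow> fls_subdegree (ev c p) = int (order c p)"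
  by (simp add: ev_def E0_def fls_subdegree_fls_to_fps subdegree_fps_of_poly pcomp_lin_ne0 order_pcompose_lin)

lemma rf_num_ne0: "a \<noteq> 0 \<Longrightarrow> rf_num a \<noteq> 0"
  by (metis eq_fract(3) rf_num_den(2) Zero_fract_def)

lemma rf_eval_num_den: "rf_eval_q c a = ev c (rf_num a) / ev c (rf_den a)"
  by (metis rf_eval_Fract rf_num_den)

lemma rf_eval_subdeg: "a \<noteq> 0 \<Longrightarrow>
  fls_subdegree (rf_eval_q c a) = int (order c (rf_num a)) - int (order c (rf_den a))"
  using rf_num_ne0[of a] rf_num_den(1)[of a]
  by (simp add: rf_eval_num_den fls_divide_subdegree ev_subdeg)

lemma nu_q_rf_eval: "nu_q (rf_eval_q z a) = nu_z z a"
  by (cases "a = 0") (auto simp: nu_q_def nu_z_def rf_eval_subdeg)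

lemma rf_eval_subdeg_good:
  assumes "a \<noteq> 0" "poly (rf_num a) c \<noteq> 0" "poly (rf_den a) c \<noteq> 0"
  shows "fls_subdegree (rf_eval_q c a) = 0"
  using assms by (simp add: rf_eval_subdeg order_root)

lemma finite_bad:
  fixes z :: "'a::field_char_0"
  assumes "a \<noteq> 0"
  shows "finite {w::int. fls_subdegree (rf_eval_q (z + of_int w) a) \<noteq> 0}"
proof -
  let ?h = "\<lambda>w::int. z + of_int w"
  have inj: "inj ?h" by (auto simp: inj_def)
  have "{w::int. fls_subdegree (rf_eval_q (z + of_int w) a) \<noteq> 0} \<subseteq>
      ?h -` {x. poly (rf_num a) x = 0} \<union> ?h -` {x. poly (rf_den a) x = 0}"
    using rf_eval_subdeg_good[OF assms] by auto
  moreover have "finite (?h -` {x. poly (rf_num a) x = 0})"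
    by (rule finite_vimageI[OF poly_roots_finite[OF rf_num_ne0[OF assms]] inj])
  moreover have "finite (?h -` {x. poly (rf_den a) x = 0})"
    by (rule finite_vimageI[OF poly_roots_finite[OF rf_num_den(1)] inj])
  ultimately show ?thesis by (meson finite_Un finite_subset)
qed



definition ee :: "'a::field \<Rightarrow> 'a poly fract poly \<Rightarrow> nat \<Rightarrow> int \<Rightarrow> 'a fls" where
  "ee z L i w = rf_eval_q (z + of_int w) (coeff L i)"

definition Wd :: "'a::field poly fract poly \<Rightarrow> (int \<Rightarrow> 'a fls) \<Rightarrow> int \<Rightarrow> int \<Rightarrow> bool" where
  "Wd L f w k \<longleftrightarrow> (\<forall>i<degree L. geq (f (w + int i)) k)"

definition sdL :: "'a::field \<Rightarrow> 'a poly fract poly \<Rightarrow> nat \<Rightarrow> int \<Rightarrow> int" where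
  "sdL z L i w = fls_subdegree (ee z L i w)"

definition Dfun :: "'a::field \<Rightarrow> 'a poly fract poly \<Rightarrow> int \<Rightarrow> int" where
  "Dfun z L w = - (\<Sum>i\<le>degree L. \<bar>sdL z L i w\<bar>) - \<bar>sdL z L (degree L) w\<bar>"

lemma Sol_iff: "f \<in> Sol z L \<longleftrightarrow> (\<forall>n. (\<Sum>i\<le>degree L. ee z L i n * f (n + int i)) = 0)"
  by (simp add: Sol_def op_act_def ee_def)

lemma ee_ne0: "coeff L i \<noteq> 0 \<Longrightarrow> ee z L i w \<noteq> 0"
  by (simp add: ee_def)

lemma sol_fwd:
  assumes "f \<in> Sol z L" "lead_coeff L \<noteq> 0"
  shows "f (n + int (degree L)) = - (\<Sum>i<degree L. ee z L i n * f (n + int i)) / ee z L (degree L) n"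
proof -
  have ne: "ee z L (degree L) n \<noteq> 0" using assms(2) ee_ne0 by blast
  have "(\<Sum>i\<le>degree L. ee z L i n * f (n + int i)) = 0" using assms(1) Sol_iff by blast
  then have "(\<Sum>i<degree L. ee z L i n * f (n + int i)) + ee z L (degree L) n * f (n + int (degree L)) = 0"
    by (simp add: lessThan_Suc_atMost[symmetric])
  then show ?thesis using ne by (simp add: eq_divide_eq algebra_simps add_eq_0_iff)
qed

lemma sol_bwd:
  assumes "f \<in> Sol z L" "coeff L 0 \<noteq> 0"
  shows "f n = - (\<Sum>i\<in>{1..degree L}. ee z L i n * f (n + int i)) / ee z L 0 n"
proof -
  have ne: "ee z L 0 n \<noteq> 0" using assms(2) ee_ne0 by blast
  have "(\<Sum>i\<le>degree L. ee z L i n * f (n + int i)) = 0" using assms(1) Sol_iff by blast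
  moreover have "{..degree L} = insert 0 {1..degree L}" by auto
  ultimately have "ee z L 0 n * f n + (\<Sum>i\<in>{1..degree L}. ee z L i n * f (n + int i)) = 0"
    by simp
  then show ?thesis using ne by (simp add: eq_divide_eq algebra_simps add_eq_0_iff)
qed

lemma Dfun_le: "Dfun z L w \<le> 0"
proof -
  have "0 \<le> (\<Sum>i\<le>degree L. \<bar>sdL z L i w\<bar>)" by (rule sum_nonneg) auto
  then show ?thesis unfolding Dfun_def by linarith
qed

lemma fwd_step:
  assumes "f \<in> Sol z L" "lead_coeff L \<noteq> 0" "Wd L f w k"
  shows "Wd L f (w + 1) (k + Dfun z L w)"
  unfolding Wd_def
proof (intro allI impI)
  fix i assume i: "i < degree L"
  show "geq (f (w + 1 + int i)) (k + Dfun z L w)"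
  proof (cases "Suc i < degree L")
    case True
    then have "geq (f (w + int (Suc i))) k" using assms(3) Wd_def by blast
    then show ?thesis using Dfun_le[of z L w] by (auto intro: geq_mono simp: add.assoc)
  next
    case False
    then have eq: "w + 1 + int i = w + int (degree L)" using i by simp
    let ?r = "degree L"
    have ne: "ee z L ?r w \<noteq> 0" using assms(2) ee_ne0 by blast
    have "geq (ee z L j w * f (w + int j)) (k + Dfun z L w + sdL z L ?r w)" if j: "j < ?r" for j
    proof -
      have "geq (ee z L j w * f (w + int j)) (sdL z L j w + k)"
        using geq_mult[OF geq_subdeg[of "ee z L j w"], of "f (w + int j)" k] assms(3) j
        by (simp add: Wd_def sdL_def)
      moreover have "\<bar>sdL z L j w\<bar> \<le> (\<Sum>i\<le>?r. \<bar>sdL z L i w\<bar>)"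
        using j by (intro member_le_sum) auto
      ultimately show ?thesis by (elim geq_mono) (simp add: Dfun_def)
    qed
    then have "geq (- (\<Sum>j<?r. ee z L j w * f (w + int j))) (k + Dfun z L w + sdL z L ?r w)"
      by (intro geq_uminus geq_sum) auto
    then have "geq (- (\<Sum>j<?r. ee z L j w * f (w + int j)) / ee z L ?r w) (k + Dfun z L w)"
      using geq_div[OF ne] by (fastforce simp: sdL_def)
    moreover have "f (w + 1 + int i) = - (\<Sum>j<?r. ee z L j w * f (w + int j)) / ee z L ?r w"
      using sol_fwd[OF assms(1,2), of w] unfolding eq by simp
    ultimately show ?thesis by simp
  qed
qed

definition good :: "'a::field \<Rightarrow> 'a poly fract poly \<Rightarrow> int \<Rightarrow> bool" where
  "good z L w \<longleftrightarrow> (\<forall>i\<le>degree L. sdL z L i w = 0)"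

lemma good_Dfun: "good z L w \<Longrightarrow> Dfun z L w = 0"
  by (simp add: good_def Dfun_def)

lemma bwd_step:
  assumes "f \<in> Sol z L" "coeff L 0 \<noteq> 0" "good z L w" "Wd L f (w + 1) k"
  shows "Wd L f w k"
  unfolding Wd_def
proof (intro allI impI)
  fix i assume i: "i < degree L"
  show "geq (f (w + int i)) k"
  proof (cases "i = 0")
    case False
    have "i - 1 < degree L" using i by linarith
    then have "geq (f (w + 1 + int (i - 1))) k" using assms(4) unfolding Wd_def by blast
    moreover have "w + 1 + int (i - 1) = w + int i" using False by simp
    ultimately show ?thesis by simp
  next
    case True
    let ?r = "degree L"
    have ne: "ee z L 0 w \<noteq> 0" using assms(2) ee_ne0 by blast
    have "geq (ee z L j w * f (w + int j)) k" if j: "j \<in> {1..?r}" for j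
    proof -
      have "j - 1 < degree L" using j by auto
      then have "geq (f (w + 1 + int (j - 1))) k" using assms(4) unfolding Wd_def by blast
      moreover have "w + 1 + int (j - 1) = w + int j" using j by auto
      ultimately have "geq (f (w + int j)) k" by simp
      then have "geq (ee z L j w * f (w + int j)) (sdL z L j w + k)"
        using geq_mult[OF geq_subdeg[of "ee z L j w"], of "f (w + int j)" k] by (simp add: sdL_def)
      then show ?thesis using assms(3) j by (simp add: good_def)
    qed
    then have "geq (- (\<Sum>j\<in>{1..?r}. ee z L j w * f (w + int j))) k"
      by (intro geq_uminus geq_sum) auto
    then have "geq (- (\<Sum>j\<in>{1..?r}. ee z L j w * f (w + int j)) / ee z L 0 w) k"
      using geq_div[OF ne] assms(3) by (fastforce simp: sdL_def good_def)
    then show ?thesis using sol_bwd[OF assms(1,2), of w] True by simp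
  qed
qed

lemma exists_good:
  fixes z :: "'a::field_char_0"
  shows "\<exists>N::int. N \<le> -1 \<and> (\<forall>w\<le>N. good z L w)"
proof -
  let ?S = "\<Union>i\<in>{i. i \<le> degree L \<and> coeff L i \<noteq> 0}. {w::int. sdL z L i w \<noteq> 0}"
  have fin: "finite ?S"
    by (intro finite_UN_I) (auto simp: sdL_def ee_def intro: finite_bad)
  have sub: "{w. \<not> good z L w} \<subseteq> ?S"
    by (auto simp: good_def sdL_def ee_def)
  obtain M where M: "\<forall>w\<in>?S. M \<le> w"
    using bdd_below_finite[OF fin] unfolding bdd_below_def by blast
  have "\<forall>w\<le>min (-1) (M - 1). good z L w"
    using sub M by force
  then show ?thesis by (intro exI[of _ "min (-1) (M - 1)"]) auto
qed



function bsol :: "(nat \<Rightarrow> int \<Rightarrow> 'a::field fls) \<Rightarrow> nat \<Rightarrow> (int \<Rightarrow> 'a fls) \<Rightarrow> int \<Rightarrow> 'a fls" where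
  "bsol e r g k = (if 0 \<le> k \<and> k < int r then g k
     else if int r \<le> k then - (\<Sum>i<r. e i (k - int r) * bsol e r g (k - int r + int i)) / e r (k - int r)
     else - (\<Sum>i\<in>{1..r}. e i k * bsol e r g (k + int i)) / e 0 k)"
  by auto
termination
  by (relation "measure (\<lambda>(e, r, g, k). nat (if k < 0 then int r - k else k))") auto

declare bsol.simps[simp del]

lemma bsol_Sol:
  assumes "coeff L 0 \<noteq> 0" "lead_coeff L \<noteq> 0"
  shows "bsol (ee z L) (degree L) g \<in> Sol z L"
  unfolding Sol_iff
proof
  fix n :: int
  let ?r = "degree L" and ?b = "bsol (ee z L) (degree L) g"
  show "(\<Sum>i\<le>?r. ee z L i n * ?b (n + int i)) = 0"
  proof (cases "0 \<le> n")
    case True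
    have ne: "ee z L ?r n \<noteq> 0" using assms(2) ee_ne0 by blast
    have "?b (n + int ?r) = - (\<Sum>i<?r. ee z L i n * ?b (n + int i)) / ee z L ?r n"
      using True by (subst bsol.simps) simp
    then have "(\<Sum>i<?r. ee z L i n * ?b (n + int i)) + ee z L ?r n * ?b (n + int ?r) = 0"
      using ne by simp
    then show ?thesis by (simp add: lessThan_Suc_atMost[symmetric])
  next
    case False
    have ne: "ee z L 0 n \<noteq> 0" using assms(1) ee_ne0 by blast
    have "?b n = - (\<Sum>i\<in>{1..?r}. ee z L i n * ?b (n + int i)) / ee z L 0 n"
      using False by (subst bsol.simps) simp
    then have "ee z L 0 n * ?b n + (\<Sum>i\<in>{1..?r}. ee z L i n * ?b (n + int i)) = 0"
      using ne by simp
    moreover have "{..?r} = insert 0 {1..?r}" by auto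
    ultimately show ?thesis by simp
  qed
qed

lemma bsol_init: "0 \<le> k \<Longrightarrow> k < int r \<Longrightarrow> bsol e r g k = g k"
  by (subst bsol.simps) simp



lemma Wd_mono: "Wd L f w k \<Longrightarrow> j \<le> k \<Longrightarrow> Wd L f w j"
  by (auto simp: Wd_def intro: geq_mono)

lemma window_const:
  assumes "f \<in> Sol z L" "coeff L 0 \<noteq> 0" "lead_coeff L \<noteq> 0" "\<forall>w\<le>N. good z L w"
  shows "Wd L f (N + 1 - int s) k \<longleftrightarrow> Wd L f (N + 1) k"
proof (induction s)
  case (Suc s)
  have g: "good z L (N - int s)" using assms(4) by simp
  have "Wd L f (N - int s) k \<longleftrightarrow> Wd L f (N - int s + 1) k"
  proof
    assume "Wd L f (N - int s) k"
    then show "Wd L f (N - int s + 1) k"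
      using fwd_step[OF assms(1,3)] good_Dfun[OF g] by fastforce
  next
    assume "Wd L f (N - int s + 1) k"
    then show "Wd L f (N - int s) k" using bwd_step[OF assms(1,2) g] by blast
  qed
  moreover have "N - int s + 1 = N + 1 - int s" by simp
  moreover have "N + 1 - int (Suc s) = N - int s" by simp
  ultimately show ?case using Suc.IH by simp
qed simp

lemma fwd_bound:
  assumes "lead_coeff L \<noteq> 0"
  shows "\<exists>C\<ge>0. \<forall>f\<in>Sol z L. \<forall>k. Wd L f B k \<longrightarrow> (\<forall>t'\<le>t. Wd L f (B + int t') (k - C))"
proof (induction t)
  case 0
  show ?case by (intro exI[of _ 0]) auto
next
  case (Suc t)
  then obtain C where C: "C \<ge> 0" "\<forall>f\<in>Sol z L. \<forall>k. Wd L f B k \<longrightarrow> (\<forall>t'\<le>t. Wd L f (B + int t') (k - C))"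
    by blast
  define C' where "C' = C - Dfun z L (B + int t)"
  have C'ge: "C' \<ge> C" using Dfun_le[of z L "B + int t"] by (simp add: C'_def)
  show ?case
  proof (intro exI[of _ C'] conjI ballI allI impI)
    show "0 \<le> C'" using C'ge C by simp
  next
    fix f k t' assume f: "f \<in> Sol z L" and W: "Wd L f B k" and t': "t' \<le> Suc t"
    show "Wd L f (B + int t') (k - C')"
    proof (cases "t' \<le> t")
      case True
      then show ?thesis using C(2) f W C'ge by (meson Wd_mono diff_left_mono)
    next
      case False
      then have "t' = Suc t" using t' by simp
      have "Wd L f (B + int t) (k - C)" using C(2) f W by blast
      then have "Wd L f (B + int t + 1) (k - C + Dfun z L (B + int t))"
        using fwd_step[OF f assms] by blast
      then show ?thesis using \<open>t' = Suc t\<close> by (simp add: C'_def algebra_simps)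
    qed
  qed
qed

definition nuW :: "'a::field poly fract poly \<Rightarrow> (int \<Rightarrow> 'a fls) \<Rightarrow> int \<Rightarrow> ereal" where
  "nuW L f B = (INF i\<in>{..<degree L}. nu_q (f (B + int i)))"

lemma Wd_nuW: "Wd L f B k \<longleftrightarrow> ereal (of_int k) \<le> nuW L f B"
  by (auto simp: Wd_def nuW_def le_INF_iff geq_nu)

lemma nuW_cases:
  assumes "degree L \<ge> 1"
  shows "nuW L f B = \<infinity> \<or> (\<exists>k::int. nuW L f B = ereal (of_int k))"
proof -
  let ?A = "(\<lambda>i. nu_q (f (B + int i))) ` {..<degree L}"
  have "Inf ?A \<in> ?A"
    by (rule finite_Inf_in) (use assms in \<open>auto simp: inf_min min_def lessThan_empty_iff\<close>)
  then obtain i where "nuW L f B = nu_q (f (B + int i))" unfolding nuW_def by auto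
  then show ?thesis using nu_q_cases by metis
qed

lemma ereal_less_int_succ:
  assumes "ereal (of_int m) < nu_q x"
  shows "ereal (of_int (m + 1)) \<le> nu_q x"
  using nu_q_cases[of x] assms by (cases "x = 0") (auto simp: nu_q_def)

lemma liminf_eq:
  assumes "f \<in> Sol z L" "coeff L 0 \<noteq> 0" "lead_coeff L \<noteq> 0" "\<forall>w\<le>N. good z L w"
    and "N \<le> -1" and "degree L \<ge> 1"
  shows "liminf (\<lambda>n::nat. nu_q (f (- int n))) = nuW L f (N + 1)"
proof (rule antisym)
  let ?B = "N + 1"
  have wc: "\<And>w k. w \<le> ?B \<Longrightarrow> Wd L f w k \<longleftrightarrow> Wd L f ?B k"
  proof -
    fix w k assume "w \<le> ?B"
    then have "w = N + 1 - int (nat (N + 1 - w))" by simp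
    then show "Wd L f w k \<longleftrightarrow> Wd L f ?B k"
      using window_const[OF assms(1-4), of "nat (N + 1 - w)" k] by metis
  qed
  show "nuW L f ?B \<le> liminf (\<lambda>n::nat. nu_q (f (- int n)))"
  proof (rule Liminf_bounded, unfold eventually_sequentially, intro exI allI impI)
    fix n assume "nat (- ?B) \<le> n"
    then have le: "- int n \<le> ?B" by linarith
    show "nuW L f ?B \<le> nu_q (f (- int n))"
    proof (rule ereal_le_int_cases[OF nuW_cases[OF assms(6)]])
      fix k :: int assume "ereal (of_int k) \<le> nuW L f ?B"
      then have "Wd L f (- int n) k" using wc[OF le] Wd_nuW by blast
      moreover have "0 < degree L" using assms(6) by simp
      ultimately have "geq (f (- int n + int 0)) k" unfolding Wd_def by blast
      then show "ereal (of_int k) \<le> nu_q (f (- int n))" by (simp add: geq_nu)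
    qed
  qed
  show "liminf (\<lambda>n::nat. nu_q (f (- int n))) \<le> nuW L f ?B"
  proof (cases "nuW L f ?B = \<infinity>")
    case False
    then obtain m :: int where m: "nuW L f ?B = ereal (of_int m)" using nuW_cases[OF assms(6)] by blast
    show ?thesis
    proof (rule ccontr)
      assume "\<not> ?thesis"
      then have "ereal (of_int m) < liminf (\<lambda>n::nat. nu_q (f (- int n)))" using m by simp
      then have "eventually (\<lambda>n. ereal (of_int m) < nu_q (f (- int n))) sequentially"
        by (rule less_LiminfD)
      then obtain n0 where n0: "\<And>n. n \<ge> n0 \<Longrightarrow> ereal (of_int m) < nu_q (f (- int n))"
        unfolding eventually_sequentially by blast
      define w where "w = min ?B (- int n0 - int (degree L))"
      have "Wd L f w (m + 1)"
        unfolding Wd_def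
      proof (intro allI impI)
        fix i assume i: "i < degree L"
        define n where "n = nat (- (w + int i))"
        have "n \<ge> n0" "- int n = w + int i" using i by (auto simp: n_def w_def)
        then show "geq (f (w + int i)) (m + 1)"
          using n0 ereal_less_int_succ geq_nu by metis
      qed
      then have "Wd L f ?B (m + 1)" using wc[of w] by (simp add: w_def)
      then show False using m Wd_nuW by force
    qed
  qed simp
qed

lemma op_lower:
  assumes "lead_coeff L \<noteq> 0" "B0 \<le> 0" "degree L \<ge> 1"
  shows "\<exists>K. \<forall>f\<in>Sol z L. \<forall>k. Wd L f B0 k \<longrightarrow> geq (op_act z P f 0) (k - K)"
proof -
  obtain C where C: "C \<ge> 0" "\<forall>f\<in>Sol z L. \<forall>k. Wd L f B0 k \<longrightarrow>
      (\<forall>t'\<le>nat (- B0) + degree P. Wd L f (B0 + int t') (k - C))"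
    using fwd_bound[OF assms(1), of z B0 "nat (- B0) + degree P"] by blast
  define K' where "K' = (\<Sum>j\<le>degree P. \<bar>fls_subdegree (rf_eval_q z (coeff P j))\<bar>)"
  show ?thesis
  proof (intro exI[of _ "C + K'"] ballI allI impI)
    fix f k assume f: "f \<in> Sol z L" and W: "Wd L f B0 k"
    have "geq (rf_eval_q z (coeff P j) * f (int j)) (k - (C + K'))" if j: "j \<le> degree P" for j
    proof -
      have "nat (- B0) + j \<le> nat (- B0) + degree P" using j by simp
      then have "Wd L f (B0 + int (nat (- B0) + j)) (k - C)" using C(2) f W by blast
      moreover have "B0 + int (nat (- B0) + j) = int j" using assms(2) by simp
      ultimately have "Wd L f (int j) (k - C)" by simp
      moreover have "0 < degree L" using assms(3) by simp
      ultimately have "geq (f (int j + int 0)) (k - C)" unfolding Wd_def by blast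
      then have "geq (f (int j)) (k - C)" by simp
      then have "geq (rf_eval_q z (coeff P j) * f (int j)) (fls_subdegree (rf_eval_q z (coeff P j)) + (k - C))"
        by (rule geq_mult[OF geq_subdeg])
      moreover have "\<bar>fls_subdegree (rf_eval_q z (coeff P j))\<bar> \<le> K'"
        unfolding K'_def using j by (intro member_le_sum) auto
      ultimately show ?thesis by (elim geq_mono) simp
    qed
    then show "geq (op_act z P f 0) (k - (C + K'))"
      unfolding op_act_def by (intro geq_sum) auto
  qed
qed



definition tm :: "'a::field \<Rightarrow> 'a poly fract poly \<Rightarrow> 'a poly fract poly \<Rightarrow> (int \<Rightarrow> 'a fls) \<Rightarrow> ereal" where
  "tm z L B b = (let m = liminf (\<lambda>n::nat. nu_q (b (- int n)))
       in if m = \<infinity> then \<infinity> else nu_q (op_act z B b 0) - m)"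

lemma val_tm: "val_z z L B = (INF b\<in>Sol z L. tm z L B b)"
  by (simp add: val_z_def tm_def)

lemma op_act_zero_fun: "op_act z A (\<lambda>_. 0) n = 0"
  by (simp add: op_act_def)

lemma ideal_act: "in_left_ideal L P \<Longrightarrow> b \<in> Sol z L \<Longrightarrow> op_act z P b n = 0"
proof -
  assume "in_left_ideal L P" "b \<in> Sol z L"
  then obtain A where A: "P = ore_mult A L" unfolding in_left_ideal_def by blast
  have "op_act z L b = (\<lambda>_. 0)" using \<open>b \<in> Sol z L\<close> by (auto simp: Sol_def)
  then show ?thesis by (simp add: A op_act_ore_mult op_act_zero_fun)
qed

lemma tm_ideal: "in_left_ideal L P \<Longrightarrow> b \<in> Sol z L \<Longrightarrow> tm z L P b = \<infinity>"
  by (simp add: tm_def ideal_act Let_def nu_q_def)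

lemma val_ideal: "in_left_ideal L P \<Longrightarrow> val_z z L P = \<infinity>"
proof -
  assume h: "in_left_ideal L P"
  have "\<forall>b\<in>Sol z L. tm z L P b = top" using tm_ideal[OF h] by (simp add: top_ereal_def)
  hence "(INF b\<in>Sol z L. tm z L P b) = top" by (simp add: INF_top_conv)
  thus ?thesis by (simp add: val_tm top_ereal_def)
qed

lemma val_cong: "in_left_ideal L (B1 - B2) \<Longrightarrow> val_z z L B1 = val_z z L B2"
proof -
  assume h: "in_left_ideal L (B1 - B2)"
  have "tm z L B1 b = tm z L B2 b" if "b \<in> Sol z L" for b
  proof -
    have "op_act z (B1 - B2) b 0 = 0" using ideal_act[OF h that] .
    then have "op_act z B1 b 0 = op_act z B2 b 0" by (simp add: op_act_diff)
    then show ?thesis by (simp add: tm_def Let_def)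
  qed
  then show ?thesis by (simp add: val_tm)
qed

lemma min_minus_ereal: "min (x::ereal) y - m = min (x - m) (y - m)"
proof (cases "x \<le> y")
  case True
  then have "x - m \<le> y - m" by (rule ereal_minus_mono) simp
  then show ?thesis using True by (simp add: min_def)
next
  case False
  then have "y - m \<le> x - m" by (intro ereal_minus_mono) simp_all
  then show ?thesis using False by (simp add: min_def)
qed

lemma tm_add: "min (tm z L B1 b) (tm z L B2 b) \<le> tm z L (B1 + B2) b"
proof -
  let ?m = "liminf (\<lambda>n::nat. nu_q (b (- int n)))"
  have "min (nu_q (op_act z B1 b 0)) (nu_q (op_act z B2 b 0)) \<le> nu_q (op_act z (B1 + B2) b 0)"
    by (simp add: op_act_add nu_q_add)
  then have "min (nu_q (op_act z B1 b 0)) (nu_q (op_act z B2 b 0)) - ?m \<le> nu_q (op_act z (B1 + B2) b 0) - ?m"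
    by (rule ereal_minus_mono) simp
  then show ?thesis by (simp add: tm_def Let_def min_minus_ereal)
qed

lemma tm_smult:
  assumes "a \<noteq> 0"
  shows "tm z L (smult a B) b = nu_z z a + tm z L B b"
proof -
  define c where "c = int (order z (rf_num a)) - int (order z (rf_den a))"
  have c: "nu_z z a = ereal (of_int c)" using assms by (simp add: nu_z_def c_def)
  have "nu_q (op_act z (smult a B) b 0) = nu_z z a + nu_q (op_act z B b 0)"
    by (simp add: op_act_smult nu_q_mult nu_q_rf_eval)
  moreover have "(ereal (of_int c) + x) - m = ereal (of_int c) + (x - m)" if "m \<noteq> \<infinity>" "x \<noteq> -\<infinity>" for x m :: ereal
    using that by (cases x; cases m) simp_all
  ultimately show ?thesis using c by (simp add: tm_def Let_def)
qed

lemma INF_add_const_ereal: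
  fixes c :: ereal
  assumes "\<bar>c\<bar> \<noteq> \<infinity>"
  shows "(INF x\<in>S. c + g x) = c + (INF x\<in>S. g x)"
proof -
  have ge: "d + (INF x\<in>S. h x) \<le> (INF x\<in>S. d + h x)" for d :: ereal and h
    by (rule INF_greatest) (intro add_left_mono INF_lower)
  have inv: "- c + (c + y) = y" "c + (- c + y) = y" for y :: ereal
    using assms by (cases c; cases y; simp)+
  have "- c + (INF x\<in>S. c + g x) \<le> (INF x\<in>S. g x)"
    using ge[of "- c" "\<lambda>x. c + g x"] by (simp add: inv)
  then have "c + (- c + (INF x\<in>S. c + g x)) \<le> c + (INF x\<in>S. g x)" by (rule add_left_mono)
  then have "(INF x\<in>S. c + g x) \<le> c + (INF x\<in>S. g x)" by (simp add: inv)
  then show ?thesis using ge[of c g] by (rule antisym)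
qed

lemma Inf_int_cases:
  fixes S :: "ereal set"
  assumes "\<forall>x\<in>S. x = \<infinity> \<or> (\<exists>k::int. x = ereal (of_int k) \<and> c \<le> k)"
  shows "Inf S = \<infinity> \<or> (\<exists>k::int. Inf S = ereal (of_int k))"
proof (cases "\<forall>x\<in>S. x = \<infinity>")
  case True
  then have "Inf S = top" using Inf_top_conv(1)[of S] True by (simp add: top_ereal_def)
  then show ?thesis by (metis top_ereal_def)
next
  case False
  then obtain k0 :: int where k0: "ereal (of_int k0) \<in> S" "c \<le> k0" using assms by blast
  define T where "T = {n::nat. ereal (of_int (c + int n)) \<in> S}"
  have "nat (k0 - c) \<in> T" using k0 by (simp add: T_def)
  define n0 where "n0 = (LEAST n. n \<in> T)"
  have n0T: "n0 \<in> T" unfolding n0_def using \<open>nat (k0 - c) \<in> T\<close> by (rule LeastI)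
  have "Inf S = ereal (of_int (c + int n0))"
  proof (rule antisym)
    show "Inf S \<le> ereal (of_int (c + int n0))" using n0T by (simp add: T_def Inf_lower)
    show "ereal (of_int (c + int n0)) \<le> Inf S"
    proof (rule Inf_greatest)
      fix x assume "x \<in> S"
      then consider "x = \<infinity>" | k :: int where "x = ereal (of_int k)" "c \<le> k" using assms by blast
      then show "ereal (of_int (c + int n0)) \<le> x"
      proof cases
        case 2
        then have "nat (k - c) \<in> T" using \<open>x \<in> S\<close> by (simp add: T_def)
        then have "n0 \<le> nat (k - c)" unfolding n0_def by (rule Least_le)
        then show ?thesis using 2 by simp
      qed simp
    qed
  qed
  then show ?thesis by blast
qed



lemma pos_bound:
  assumes "lead_coeff L \<noteq> 0" "B0 \<le> 0" "degree L \<ge> 1"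
  shows "\<exists>C. \<forall>f\<in>Sol z L. \<forall>k. Wd L f B0 k \<longrightarrow> (\<forall>j\<le>T. geq (f (int j)) (k - C))"
proof -
  obtain C where C: "C \<ge> 0" "\<forall>f\<in>Sol z L. \<forall>k. Wd L f B0 k \<longrightarrow>
      (\<forall>t'\<le>nat (- B0) + T. Wd L f (B0 + int t') (k - C))"
    using fwd_bound[OF assms(1), of z B0 "nat (- B0) + T"] by blast
  show ?thesis
  proof (intro exI[of _ C] ballI allI impI)
    fix f k j assume f: "f \<in> Sol z L" and W: "Wd L f B0 k" and j: "j \<le> T"
    have "nat (- B0) + j \<le> nat (- B0) + T" using j by simp
    then have "Wd L f (B0 + int (nat (- B0) + j)) (k - C)" using C(2) f W by blast
    moreover have "B0 + int (nat (- B0) + j) = int j" using assms(2) by simp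
    ultimately have "Wd L f (int j) (k - C)" by simp
    moreover have "0 < degree L" using assms(3) by simp
    ultimately have "geq (f (int j + int 0)) (k - C)" unfolding Wd_def by blast
    then show "geq (f (int j)) (k - C)" by simp
  qed
qed

lemma tm_nuW:
  fixes z :: "'a::field_char_0"
  assumes "b \<in> Sol z L" "coeff L 0 \<noteq> 0" "lead_coeff L \<noteq> 0" "\<forall>w\<le>N. good z L w"
    and "N \<le> -1" and "degree L \<ge> 1"
  shows "tm z L B b = (if nuW L b (N + 1) = \<infinity> then \<infinity> else nu_q (op_act z B b 0) - nuW L b (N + 1))"
  using liminf_eq[OF assms] by (simp add: tm_def)

lemma val_int_pos:
  fixes z :: "'a::field_char_0"
  assumes "coeff L 0 \<noteq> 0" "lead_coeff L \<noteq> 0" "degree L \<ge> 1"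
  shows "val_z z L B = \<infinity> \<or> (\<exists>k::int. val_z z L B = ereal (of_int k))"
proof -
  obtain N :: int where N: "N \<le> -1" "\<forall>w\<le>N. good z L w" using exists_good by blast
  have "N + 1 \<le> 0" using N(1) by simp
  then obtain K where K: "\<forall>f\<in>Sol z L. \<forall>k. Wd L f (N + 1) k \<longrightarrow> geq (op_act z B f 0) (k - K)"
    using op_lower[OF assms(2) _ assms(3), of "N + 1" z B] by blast
  have "\<forall>x\<in>tm z L B ` Sol z L. x = \<infinity> \<or> (\<exists>k::int. x = ereal (of_int k) \<and> - K \<le> k)"
  proof
    fix x assume "x \<in> tm z L B ` Sol z L"
    then obtain b where b: "b \<in> Sol z L" "x = tm z L B b" by blast
    note t = tm_nuW[OF b(1) assms(1,2) N(2,1) assms(3), of B]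
    show "x = \<infinity> \<or> (\<exists>k::int. x = ereal (of_int k) \<and> - K \<le> k)"
    proof (cases "nuW L b (N + 1) = \<infinity>")
      case True then show ?thesis using b t by simp
    next
      case False
      then obtain m :: int where m: "nuW L b (N + 1) = ereal (of_int m)"
        using nuW_cases[OF assms(3)] by blast
      then have "Wd L b (N + 1) m" by (simp add: Wd_nuW)
      then have g: "geq (op_act z B b 0) (m - K)" using K b(1) by blast
      show ?thesis
      proof (cases "op_act z B b 0 = 0")
        case True then show ?thesis using b t m by (simp add: nu_q_def)
      next
        case False
        then have "m - K \<le> fls_subdegree (op_act z B b 0)" using g geq_iff[OF False] by simp
        then show ?thesis using b t m False
          by (intro disjI2 exI[of _ "fls_subdegree (op_act z B b 0) - m"]) (simp add: nu_q_def)
      qed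
    qed
  qed
  then show ?thesis unfolding val_tm by (rule Inf_int_cases)
qed

lemma val_inf_pos:
  fixes z :: "'a::field_char_0"
  assumes "coeff L 0 \<noteq> 0" "lead_coeff L \<noteq> 0" "degree L \<ge> 1" "val_z z L B = \<infinity>"
  shows "in_left_ideal L B"
proof -
  obtain N :: int where N: "N \<le> -1" "\<forall>w\<le>N. good z L w" using exists_good by blast
  obtain A R where AR: "B = ore_mult A L + R" "\<forall>i\<ge>degree L. coeff R i = 0"
    using ore_div[OF assms(2)] by blast
  have "N + 1 \<le> 0" using N(1) by simp
  then obtain C where C: "\<forall>f\<in>Sol z L. \<forall>k. Wd L f (N + 1) k \<longrightarrow> (\<forall>j\<le>degree L. geq (f (int j)) (k - C))"
    using pos_bound[OF assms(2) _ assms(3), of "N + 1" z "degree L"] by blast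
  have allinf: "\<forall>b\<in>Sol z L. tm z L B b = \<infinity>"
    using assms(4) unfolding val_tm using INF_top_conv(1)[of "tm z L B" "Sol z L"]
    by (simp add: top_ereal_def)
  have degR: "degree R \<le> degree L - 1"
    using AR(2) by (intro degree_le) auto
  have "coeff R k0 = 0" for k0
  proof (cases "k0 < degree L")
    case False then show ?thesis using AR(2) by simp
  next
    case True
    define b where "b = bsol (ee z L) (degree L) (\<lambda>j. if j = int k0 then 1 else 0)"
    have bS: "b \<in> Sol z L" unfolding b_def by (rule bsol_Sol[OF assms(1,2)])
    have binit: "b (int j) = (if j = k0 then 1 else 0)" if "j < degree L" for j
      using that unfolding b_def by (simp add: bsol_init)
    have "nuW L b (N + 1) \<noteq> \<infinity>"
    proof
      assume "nuW L b (N + 1) = \<infinity>"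
      then have "\<And>k. Wd L b (N + 1) k" by (simp add: Wd_nuW)
      then have "\<And>k. geq (b (int k0)) (k - C)" using C bS True by auto
      then have "\<And>k. geq (b (int k0)) k" by (metis add_diff_cancel_right')
      then have "b (int k0) = 0" by (rule all_geq_imp_0)
      then show False using binit[OF True] by simp
    qed
    then obtain m :: int where m: "nuW L b (N + 1) = ereal (of_int m)"
      using nuW_cases[OF assms(3)] by blast
    have "tm z L B b = \<infinity>" using allinf bS by blast
    then have "nu_q (op_act z B b 0) - ereal (of_int m) = \<infinity>"
      using tm_nuW[OF bS assms(1,2) N(2,1) assms(3), of B] m by simp
    then have "op_act z B b 0 = 0" by (cases "op_act z B b 0 = 0") (auto simp: nu_q_def)
    moreover have "op_act z B b 0 = op_act z R b 0"
    proof -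
      have "in_left_ideal L (ore_mult A L)" unfolding in_left_ideal_def by blast
      then have "op_act z (ore_mult A L) b 0 = 0" using ideal_act bS by blast
      then show ?thesis by (simp add: AR(1) op_act_add)
    qed
    moreover have "op_act z R b 0 = (\<Sum>i\<le>degree L - 1. rf_eval_q z (coeff R i) * b (int i))"
      using op_act_bound[OF degR, of z b 0] by simp
    moreover have "\<dots> = (\<Sum>i\<le>degree L - 1. if i = k0 then rf_eval_q z (coeff R i) else 0)"
      using assms(3) by (intro sum.cong) (auto simp: binit)
    moreover have "\<dots> = rf_eval_q z (coeff R k0)"
      using True by simp
    ultimately show ?thesis by simp
  qed
  then have "R = 0" by (intro poly_eqI) simp
  then show ?thesis using AR(1) unfolding in_left_ideal_def by auto
qed

lemma deg0_sol:
  assumes "degree L = 0" "lead_coeff L \<noteq> 0" "b \<in> Sol z L"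
  shows "tm z L B b = \<infinity>"
proof -
  have "b n = 0" for n using sol_fwd[OF assms(3,2), of n] assms(1) by simp
  then have "liminf (\<lambda>n::nat. nu_q (b (- int n))) = \<infinity>" by (simp add: nu_q_def Liminf_const)
  then show ?thesis by (simp add: tm_def)
qed

lemma deg0_val:
  assumes "degree L = 0" "lead_coeff L \<noteq> 0"
  shows "val_z z L B = \<infinity>"
proof -
  have "\<forall>b\<in>Sol z L. tm z L B b = top" using deg0_sol[OF assms] by (simp add: top_ereal_def)
  hence "(INF b\<in>Sol z L. tm z L B b) = top" by (simp add: INF_top_conv)
  thus ?thesis by (simp add: val_tm top_ereal_def)
qed

lemma deg0_ideal:
  assumes "degree L = 0" "lead_coeff L \<noteq> 0"
  shows "in_left_ideal L B"
proof -
  obtain A R where AR: "B = ore_mult A L + R" "\<forall>i\<ge>degree L. coeff R i = 0"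
    using ore_div[OF assms(2)] by blast
  then have "R = 0" using assms(1) by (intro poly_eqI) simp
  then show ?thesis using AR(1) unfolding in_left_ideal_def by auto
qed

lemma val_int_all:
  fixes z :: "'a::field_char_0"
  assumes "coeff L 0 \<noteq> 0" "lead_coeff L \<noteq> 0"
  shows "val_z z L B = \<infinity> \<or> (\<exists>k::int. val_z z L B = ereal (of_int k))"
  using val_int_pos[OF assms] deg0_val[OF _ assms(2)] by (cases "degree L = 0") auto

lemma val_inf_iff:
  fixes z :: "'a::field_char_0"
  assumes "coeff L 0 \<noteq> 0" "lead_coeff L \<noteq> 0"
  shows "val_z z L B = \<infinity> \<longleftrightarrow> in_left_ideal L B"
proof
  assume "val_z z L B = \<infinity>"
  then show "in_left_ideal L B"
    using val_inf_pos[OF assms] deg0_ideal[OF _ assms(2)] by (cases "degree L = 0") auto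
qed (rule val_ideal)

lemma val_smult:
  fixes z :: "'a::field_char_0"
  assumes "coeff L 0 \<noteq> 0" "lead_coeff L \<noteq> 0"
  shows "val_z z L (smult a B) = nu_z z a + val_z z L B"
proof (cases "a = 0")
  case True
  have "in_left_ideal L 0" unfolding in_left_ideal_def by (intro exI[of _ 0]) simp
  then have "val_z z L (smult a B) = \<infinity>" using True val_ideal by simp
  moreover have "nu_z z a = \<infinity>" using True by (simp add: nu_z_def)
  ultimately show ?thesis by simp
next
  case False
  define c where "c = int (order z (rf_num a)) - int (order z (rf_den a))"
  have c: "nu_z z a = ereal (of_int c)" using False by (simp add: nu_z_def c_def)
  have "val_z z L (smult a B) = (INF b\<in>Sol z L. nu_z z a + tm z L B b)"
    by (simp add: val_tm tm_smult[OF False])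
  also have "\<dots> = nu_z z a + val_z z L B"
    unfolding val_tm c by (rule INF_add_const_ereal) simp
  finally show ?thesis .
qed

lemma val_add:
  "min (val_z z L B1) (val_z z L B2) \<le> val_z z L (B1 + B2)"
  unfolding val_tm
proof (rule INF_greatest)
  fix b assume b: "b \<in> Sol z L"
  have "min (INF b\<in>Sol z L. tm z L B1 b) (INF b\<in>Sol z L. tm z L B2 b) \<le> min (tm z L B1 b) (tm z L B2 b)"
    using b by (intro min.mono INF_lower)
  also have "\<dots> \<le> tm z L (B1 + B2) b" by (rule tm_add)
  finally show "min (INF b\<in>Sol z L. tm z L B1 b) (INF b\<in>Sol z L. tm z L B2 b) \<le> tm z L (B1 + B2) b" .
qed

theorem mainTheorem6:
  fixes Cs :: "'k::{alg_closed_field, field_char_0} set"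
    and L :: "'k poly fract poly" and z :: 'k
  assumes "is_subfield Cs" and "algebraic_over Cs"
    and "\<forall>i. rf_over Cs (coeff L i)"
    and "coeff L 0 \<noteq> 0" and "lead_coeff L \<noteq> 0"
  shows "(\<forall>B1 B2. in_left_ideal L (B1 - B2) \<longrightarrow> val_z z L B1 = val_z z L B2)
    \<and> (\<forall>B. val_z z L B = \<infinity> \<or> (\<exists>k::int. val_z z L B = ereal (of_int k)))
    \<and> (\<forall>B. val_z z L B = \<infinity> \<longleftrightarrow> in_left_ideal L B)
    \<and> (\<forall>a B. val_z z L (smult a B) = nu_z z a + val_z z L B)
    \<and> (\<forall>B1 B2. val_z z L (B1 + B2) \<ge> min (val_z z L B1) (val_z z L B2))"
proof (intro conjI allI impI)
  fix B1 B2 :: "'k poly fract poly"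
  assume "in_left_ideal L (B1 - B2)"
  then show "val_z z L B1 = val_z z L B2" by (rule val_cong)
next
  fix B :: "'k poly fract poly"
  show "val_z z L B = \<infinity> \<or> (\<exists>k::int. val_z z L B = ereal (of_int k))"
    by (rule val_int_all[OF assms(4,5)])
next
  fix B :: "'k poly fract poly"
  show "val_z z L B = \<infinity> \<longleftrightarrow> in_left_ideal L B"
    by (rule val_inf_iff[OF assms(4,5)])
next
  fix a B
  show "val_z z L (smult a B) = nu_z z a + val_z z L B"
    by (rule val_smult[OF assms(4,5)])
next
  fix B1 B2 :: "'k poly fract poly"
  show "min (val_z z L B1) (val_z z L B2) \<le> val_z z L (B1 + B2)"
    by (rule val_add)
qed


end
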